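(* For every $n\ge1$ there is a bijection $A\mapsto M$ from the set of admissible sets in $\{1,3,\dots,2n+1\}$ onto the set of Motzkin paths of length $n$ such that the weight of $A$, namely $\big(\prod_{i=1}^{2n}[a(i)]_q\big)t^{(|A|-1)/2}$, equals the weight $\rho(M)$ (product of step weights) of $M$, where an up step at height $h\ge0$ has weight $[h+1]_q[h+2]_q\,t$, a level step at height $h\ge0$ has weight $[h+1]_q^2$, and a down step at height $h\ge1$ has weight $[h+1]_q[h]_q$.
   Context: $[k]_q=1+q+\cdots+q^{k-1}$. An admissible set in $\{1,3,\dots,2n+1\}$ is a set $A$ of odd numbers in $\{1,3,\dots,2n+1\}$, each colored white or black, such that: (i) $A$ has $k$ white and $k+1$ black elements for some $k\ge0$, and $2n+1$ is black; (ii) for each $i\in[2n]$, $A\cap\{1,\dots,i\}$ has at least as many white as black elements. Its vector is $a(i)=f(i)-g(i)+1$ ($1\le i\le 2n$), where $f(i)$ (resp. $g(i)$) is the number of white (resp. black) elements of $A$ less than $i$. A Motzkin path of length $n$ is a lattice path from $(0,0)$ to $(n,0)$ staying weakly above the $x$-axis with steps up $(1,1)$, down $(1,-1)$, level $(1,0)$; the height of a step is the $y$-coordinate of its starting point. *)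

theory Defs
  imports Main
begin

definition qint :: "'a::comm_ring_1 \<Rightarrow> nat \<Rightarrow> 'a" where
  "qint q k = (\<Sum>j<k. q ^ j)"

text \<open>A colored set of odd numbers is represented as a pair (W, B) of its white
  elements W and black elements B.\<close>
definition admissible :: "nat \<Rightarrow> (nat set \<times> nat set) set" where
  "admissible n = {(W, B).
     W \<inter> B = {} \<and>
     W \<union> B \<subseteq> {m. odd m \<and> 1 \<le> m \<and> m \<le> 2*n+1} \<and>
     card B = card W + 1 \<and>
     2*n+1 \<in> B \<and>
     (\<forall>i\<in>{1..2*n}. card (B \<inter> {1..i}) \<le> card (W \<inter> {1..i}))}"

definition avec :: "nat set \<times> nat set \<Rightarrow> nat \<Rightarrow> int" where
  "avec A i = int (card {w \<in> fst A. w < i}) - int (card {b \<in> snd A. b < i}) + 1"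

definition adm_weight :: "nat \<Rightarrow> 'a::comm_ring_1 \<Rightarrow> 'a \<Rightarrow> nat set \<times> nat set \<Rightarrow> 'a" where
  "adm_weight n q t A =
     (\<Prod>i=1..2*n. qint q (nat (avec A i))) * t ^ ((card (fst A) + card (snd A) - 1) div 2)"

datatype step = Up | Level | Down

fun motzkin_from :: "nat \<Rightarrow> step list \<Rightarrow> bool" where
  "motzkin_from h [] = (h = 0)"
| "motzkin_from h (Up # s) = motzkin_from (Suc h) s"
| "motzkin_from h (Level # s) = motzkin_from h s"
| "motzkin_from 0 (Down # s) = False"
| "motzkin_from (Suc h) (Down # s) = motzkin_from h s"

definition motzkin_paths :: "nat \<Rightarrow> step list set" where
  "motzkin_paths n = {s. length s = n \<and> motzkin_from 0 s}"

fun rho_from :: "'a::comm_ring_1 \<Rightarrow> 'a \<Rightarrow> nat \<Rightarrow> step list \<Rightarrow> 'a" where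
  "rho_from q t h [] = 1"
| "rho_from q t h (Up # s) = qint q (h+1) * qint q (h+2) * t * rho_from q t (h+1) s"
| "rho_from q t h (Level # s) = qint q (h+1) ^ 2 * rho_from q t h s"
| "rho_from q t h (Down # s) = qint q (h+1) * qint q h * rho_from q t (h-1) s"

definition rho :: "'a::comm_ring_1 \<Rightarrow> 'a \<Rightarrow> step list \<Rightarrow> 'a" where
  "rho q t M = rho_from q t 0 M"

end

theory Submission imports Defs begin

fun dlt :: "step \<Rightarrow> int" where "dlt Up = 1" | "dlt Level = 0" | "dlt Down = -1"
definition ht :: "step list \<Rightarrow> nat \<Rightarrow> int" where "ht s k = (\<Sum>j<k. dlt (s!j))"

lemma ht_0[simp]: "ht s 0 = 0" by (simp add: ht_def)
lemma ht_Cons_Suc[simp]: "ht (x#s) (Suc k) = dlt x + ht s k"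
  unfolding ht_def by (simp only: sum.lessThan_Suc_shift) simp
lemma ht_Suc: "ht s (Suc k) = ht s k + dlt (s!k)" by (simp add: ht_def)

lemma all_le_Suc: "(\<forall>k\<le>Suc m. P k) \<longleftrightarrow> P 0 \<and> (\<forall>k\<le>m. P (Suc k))"
  apply auto apply (case_tac k) apply auto done

lemma motz_char: "motzkin_from h s \<longleftrightarrow> (\<forall>k\<le>length s. 0 \<le> int h + ht s k) \<and> int h + ht s (length s) = 0"
proof (induction s arbitrary: h)
  case Nil show ?case by simp
next
  case (Cons x s)
  show ?case
  proof (cases x)
    case Up
    then show ?thesis using Cons.IH[of "Suc h"] by (simp add: all_le_Suc algebra_simps)
  next
    case Level then show ?thesis using Cons.IH[of h] by (simp add: all_le_Suc)
  next
    case Down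
    show ?thesis
    proof (cases h)
      case 0
      have "\<not> (0 \<le> -1 + ht s 0)" by simp
      then show ?thesis using Down 0 by (auto simp: all_le_Suc)
    next
      case (Suc h') then show ?thesis using Down Cons.IH[of h'] by (simp add: all_le_Suc algebra_simps)
    qed
  qed
qed

lemma rho_char: "motzkin_from h s \<Longrightarrow> rho_from q t h s =
  (\<Prod>j<length s. qint q (nat (int h + ht s j + 1)) * qint q (nat (int h + ht s (Suc j) + 1))) * t ^ length (filter ((=) Up) s)"
proof (induction s arbitrary: h)
  case Nil show ?case by simp
next
  case (Cons x s)
  have sp: "(\<Prod>j<length (x#s). F j) = F 0 * (\<Prod>j<length s. F (Suc j))" for F :: "nat \<Rightarrow> 'a"
    by (simp only: length_Cons prod.lessThan_Suc_shift)
  show ?case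
  proof (cases x)
    case Up
    then show ?thesis apply (subst sp) using Cons by (simp add:  algebra_simps nat_add_distrib)
  next
    case Level then show ?thesis apply (subst sp) using Cons by (simp add:  algebra_simps power2_eq_square nat_add_distrib)
  next
    case Down
    then obtain h' where h: "h = Suc h'" using Cons.prems by (cases h) auto
    then show ?thesis apply (subst sp) using Down Cons by (simp add:  algebra_simps nat_add_distrib)
  qed
qed

lemma prod_pairs: "(\<Prod>i=1..2*n. F (i div 2)) = (\<Prod>j<n. F j * F (Suc j))"
  by (induction n) (auto simp: prod.cl_ivl_Suc mult_ac)


definition stp :: "nat set \<times> nat set \<Rightarrow> nat \<Rightarrow> step" where
  "stp A j = (if 2*j+1 \<in> fst A then Up else if 2*j+1 \<in> snd A then Down else Level)"
definition fmap :: "nat \<Rightarrow> nat set \<times> nat set \<Rightarrow> step list" where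
  "fmap n A = map (stp A) [0..<n]"
definition cnt :: "nat set \<Rightarrow> nat \<Rightarrow> nat" where
  "cnt X k = card {j. j<k \<and> 2*j+1 \<in> X}"
definition ginv :: "nat \<Rightarrow> step list \<Rightarrow> nat set \<times> nat set" where
  "ginv n s = ((\<lambda>j. 2*j+1) ` {j. j<n \<and> s!j = Up}, insert (2*n+1) ((\<lambda>j. 2*j+1) ` {j. j<n \<and> s!j = Down}))"
definition pre :: "nat \<Rightarrow> nat set \<Rightarrow> nat set \<Rightarrow> bool" where
  "pre n W B \<longleftrightarrow> W \<inter> B = {} \<and> W \<union> B \<subseteq> {m. odd m \<and> 1 \<le> m \<and> m \<le> 2*n+1} \<and> 2*n+1 \<in> B"

lemma cnt_0[simp]: "cnt X 0 = 0" by (simp add: cnt_def)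
lemma cnt_Suc: "cnt X (Suc k) = cnt X k + (if 2*k+1 \<in> X then 1 else 0)"
proof -
  have "{j. j<Suc k \<and> 2*j+1 \<in> X} = (if 2*k+1 \<in> X then insert k {j. j<k \<and> 2*j+1 \<in> X} else {j. j<k \<and> 2*j+1 \<in> X})"
    by (auto simp: less_Suc_eq)
  then show ?thesis by (simp add: cnt_def)
qed

lemma card_less_cnt:
  assumes "\<forall>x\<in>X. odd x"
  shows "card {x\<in>X. x < i} = cnt X (i div 2)"
proof -
  have "{x\<in>X. x<i} = (\<lambda>j. 2*j+1) ` {j. j < i div 2 \<and> 2*j+1 \<in> X}"
  proof (rule set_eqI, rule iffI)
    fix x assume "x \<in> {x\<in>X. x<i}"
    then have x: "x\<in>X" "x<i" by auto
    then obtain j where j: "x = 2*j+1" using assms oddE by metis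
    have "j < i div 2" using x j by presburger
    then show "x \<in> (\<lambda>j. 2*j+1) ` {j. j < i div 2 \<and> 2*j+1 \<in> X}" using x j by auto
  next
    fix x assume "x \<in> (\<lambda>j. 2*j+1) ` {j. j < i div 2 \<and> 2*j+1 \<in> X}"
    then obtain j where j: "x = 2*j+1" "j < i div 2" "2*j+1 \<in> X" by auto
    have "x < i" using j by presburger
    then show "x \<in> {x\<in>X. x<i}" using j by auto
  qed
  then show ?thesis unfolding cnt_def by (simp add: card_image inj_on_def)
qed

lemma fmap_len[simp]: "length (fmap n A) = n" by (simp add: fmap_def)
lemma fmap_nth[simp]: "j < n \<Longrightarrow> fmap n A ! j = stp A j" by (simp add: fmap_def)

lemma ht_fmap: "pre n W B \<Longrightarrow> k \<le> n \<Longrightarrow> ht (fmap n (W,B)) k = int (cnt W k) - int (cnt B k)"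
proof (induction k)
  case 0 then show ?case by simp
next
  case (Suc k)
  have "2*k+1 \<in> W \<Longrightarrow> 2*k+1 \<notin> B" using Suc.prems(1) unfolding pre_def by blast
  then show ?case using Suc by (auto simp: ht_Suc cnt_Suc stp_def)
qed

lemma card_cnt:
  assumes "X \<subseteq> {m. odd m \<and> 1 \<le> m \<and> m \<le> 2*n+1}"
  shows "card X = cnt X (Suc n)"
proof -
  have "X = {x\<in>X. x < 2*Suc n}" using assms by auto
  then have "card X = card {x\<in>X. x < 2*Suc n}" by simp
  also have "\<dots> = cnt X (2*Suc n div 2)" using assms by (intro card_less_cnt) auto
  finally show ?thesis by simp
qed

lemma card_W: "pre n W B \<Longrightarrow> card W = cnt W n"
  using card_cnt[of W n] by (auto simp: pre_def cnt_Suc)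

lemma card_B: "pre n W B \<Longrightarrow> card B = cnt B n + 1"
  using card_cnt[of B n] by (auto simp: pre_def cnt_Suc)

lemma card_interval:
  assumes "X \<subseteq> {m. odd m \<and> 1 \<le> m \<and> m \<le> 2*n+1}"
  shows "card (X \<inter> {1..i}) = cnt X (Suc i div 2)"
proof -
  have "X \<inter> {1..i} = {x\<in>X. x < Suc i}" using assms by auto
  then show ?thesis using assms card_less_cnt[of X "Suc i"] by auto
qed

lemma adm_iff:
  assumes p: "pre n W B"
  shows "(W,B) \<in> admissible n \<longleftrightarrow> motzkin_from 0 (fmap n (W,B))"
proof -
  have sW: "W \<subseteq> {m. odd m \<and> 1 \<le> m \<and> m \<le> 2*n+1}" and sB: "B \<subseteq> {m. odd m \<and> 1 \<le> m \<and> m \<le> 2*n+1}"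
    using p by (auto simp: pre_def)
  have pf: "(\<forall>i\<in>{1..2*n}. card (B \<inter> {1..i}) \<le> card (W \<inter> {1..i})) \<longleftrightarrow> (\<forall>k\<le>n. cnt B k \<le> cnt W k)"
  proof
    assume h: "\<forall>i\<in>{1..2*n}. card (B \<inter> {1..i}) \<le> card (W \<inter> {1..i})"
    show "\<forall>k\<le>n. cnt B k \<le> cnt W k"
    proof (intro allI impI)
      fix k assume k: "k \<le> n"
      show "cnt B k \<le> cnt W k"
      proof (cases "k = 0")
        case True then show ?thesis by simp
      next
        case False
        then have "2*k \<in> {1..2*n}" using k by auto
        then have "card (B \<inter> {1..2*k}) \<le> card (W \<inter> {1..2*k})" using h by blast
        then show ?thesis using card_interval[OF sB, of "2*k"] card_interval[OF sW, of "2*k"] by simp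
      qed
    qed
  next
    assume h: "\<forall>k\<le>n. cnt B k \<le> cnt W k"
    show "\<forall>i\<in>{1..2*n}. card (B \<inter> {1..i}) \<le> card (W \<inter> {1..i})"
    proof
      fix i assume i: "i \<in> {1..2*n}"
      then have "Suc i div 2 \<le> n" by auto
      then show "card (B \<inter> {1..i}) \<le> card (W \<inter> {1..i})"
        using h card_interval[OF sB, of i] card_interval[OF sW, of i] by simp
    qed
  qed
  have "(W,B) \<in> admissible n \<longleftrightarrow> card B = card W + 1 \<and> (\<forall>i\<in>{1..2*n}. card (B \<inter> {1..i}) \<le> card (W \<inter> {1..i}))"
    using p by (auto simp: admissible_def pre_def)
  also have "\<dots> \<longleftrightarrow> cnt B n = cnt W n \<and> (\<forall>k\<le>n. cnt B k \<le> cnt W k)"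
    using pf card_W[OF p] card_B[OF p] by simp
  also have "\<dots> \<longleftrightarrow> (\<forall>k\<le>n. 0 \<le> ht (fmap n (W,B)) k) \<and> ht (fmap n (W,B)) n = 0"
    using ht_fmap[OF p] by auto
  also have "\<dots> \<longleftrightarrow> motzkin_from 0 (fmap n (W,B))"
    by (simp add: motz_char)
  finally show ?thesis .
qed

lemma ginv_pre: "pre n (fst (ginv n s)) (snd (ginv n s))"
  unfolding pre_def ginv_def by auto

lemma stp_ginv: "j < n \<Longrightarrow> stp (ginv n s) j = s ! j"
  unfolding stp_def ginv_def by (cases "s!j") auto

lemma fmap_ginv: "length s = n \<Longrightarrow> fmap n (ginv n s) = s"
  by (intro nth_equalityI) (auto simp: stp_ginv)

lemma ginv_fmap:
  assumes p: "pre n W B"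
  shows "ginv n (fmap n (W,B)) = (W,B)"
proof -
  have odd2: "\<exists>j. x = 2*j+1" if "odd x" for x using that oddE by metis
  have A: "(\<lambda>j. 2*j+1) ` {j. j<n \<and> fmap n (W,B)!j = Up} = W"
  proof (rule set_eqI, rule iffI)
    fix x assume "x \<in> (\<lambda>j. 2*j+1) ` {j. j<n \<and> fmap n (W,B)!j = Up}"
    then show "x \<in> W" by (auto simp: stp_def split: if_splits)
  next
    fix x assume x: "x \<in> W"
    then obtain j where j: "x = 2*j+1" using p odd2 unfolding pre_def by blast
    have "x \<noteq> 2*n+1" using x p unfolding pre_def by blast
    then have "j < n" using x j p unfolding pre_def by auto
    then show "x \<in> (\<lambda>j. 2*j+1) ` {j. j<n \<and> fmap n (W,B)!j = Up}" using j x by (auto simp: stp_def)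
  qed
  have B: "insert (2*n+1) ((\<lambda>j. 2*j+1) ` {j. j<n \<and> fmap n (W,B)!j = Down}) = B"
  proof (rule set_eqI, rule iffI)
    fix x assume "x \<in> insert (2*n+1) ((\<lambda>j. 2*j+1) ` {j. j<n \<and> fmap n (W,B)!j = Down})"
    then show "x \<in> B" using p by (auto simp: stp_def pre_def split: if_splits)
  next
    fix x assume x: "x \<in> B"
    then obtain j where j: "x = 2*j+1" using p odd2 unfolding pre_def by blast
    have "x \<notin> W" using x p unfolding pre_def by blast
    show "x \<in> insert (2*n+1) ((\<lambda>j. 2*j+1) ` {j. j<n \<and> fmap n (W,B)!j = Down})"
    proof (cases "x = 2*n+1")
      case False
      then have "j < n" using x j p unfolding pre_def by auto
      then show ?thesis using j x \<open>x \<notin> W\<close> by (auto simp: stp_def)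
    qed simp
  qed
  show ?thesis using A B by (simp add: ginv_def)
qed

lemma weight_eq:
  assumes a: "(W,B) \<in> admissible n"
  shows "adm_weight n q t (W,B) = rho q t (fmap n (W,B))"
proof -
  have p: "pre n W B" using a by (auto simp: admissible_def pre_def)
  let ?s = "fmap n (W,B)"
  have m: "motzkin_from 0 ?s" using adm_iff[OF p] a by simp
  have oW: "\<forall>x\<in>W. odd x" and oB: "\<forall>x\<in>B. odd x" using p by (auto simp: pre_def)
  have av: "avec (W,B) i = ht ?s (i div 2) + 1" if i: "i \<in> {1..2*n}" for i
  proof -
    have "i div 2 \<le> n" using i by auto
    then show ?thesis unfolding avec_def using card_less_cnt[OF oW, of i] card_less_cnt[OF oB, of i] ht_fmap[OF p]
      by simp
  qed
  have "(\<Prod>i=1..2*n. qint q (nat (avec (W,B) i))) = (\<Prod>i=1..2*n. qint q (nat (ht ?s (i div 2) + 1)))"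
    using av by (intro prod.cong) auto
  also have "\<dots> = (\<Prod>j<n. qint q (nat (ht ?s j + 1)) * qint q (nat (ht ?s (Suc j) + 1)))"
    by (rule prod_pairs)
  finally have P: "(\<Prod>i=1..2*n. qint q (nat (avec (W,B) i))) = \<dots>" .
  have e: "(card W + card B - 1) div 2 = card W" using a by (simp add: admissible_def)
  have "length (filter ((=) Up) ?s) = card {i. i < n \<and> Up = ?s ! i}"
    by (simp add: length_filter_conv_card)
  also have "{i. i < n \<and> Up = ?s ! i} = {j. j<n \<and> 2*j+1 \<in> W}"
    by (auto simp: stp_def split: if_splits)
  finally have L: "length (filter ((=) Up) ?s) = card W" using card_W[OF p] by (simp add: cnt_def)
  show ?thesis unfolding adm_weight_def rho_def using rho_char[OF m, of q t] P e L by simp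
qed

theorem mainTheorem8:
  fixes n :: nat
  assumes "n \<ge> 1"
  shows "\<exists>f. bij_betw f (admissible n) (motzkin_paths n) \<and>
           (\<forall>(q::'a::comm_ring_1) t. \<forall>A\<in>admissible n. adm_weight n q t A = rho q t (f A))"
proof (intro exI conjI)
  show "bij_betw (fmap n) (admissible n) (motzkin_paths n)"
  proof (rule bij_betw_byWitness[where f' = "ginv n"])
    show "\<forall>a\<in>admissible n. ginv n (fmap n a) = a"
    proof
      fix a assume "a \<in> admissible n"
      moreover obtain W B where "a = (W,B)" by fastforce
      ultimately show "ginv n (fmap n a) = a" using ginv_fmap[of n W B] by (auto simp: admissible_def pre_def)
    qed
    show "\<forall>a'\<in>motzkin_paths n. fmap n (ginv n a') = a'"
      by (auto simp: motzkin_paths_def fmap_ginv)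
    show "fmap n ` admissible n \<subseteq> motzkin_paths n"
    proof
      fix x assume "x \<in> fmap n ` admissible n"
      then obtain W B where a: "(W,B) \<in> admissible n" and x: "x = fmap n (W,B)" by auto
      have "pre n W B" using a by (auto simp: admissible_def pre_def)
      then show "x \<in> motzkin_paths n" using adm_iff a x by (auto simp: motzkin_paths_def)
    qed
    show "ginv n ` motzkin_paths n \<subseteq> admissible n"
    proof
      fix x assume "x \<in> ginv n ` motzkin_paths n"
      then obtain s where s: "s \<in> motzkin_paths n" and x: "x = ginv n s" by auto
      have "x = (fst x, snd x)" by simp
      moreover have "pre n (fst x) (snd x)" using ginv_pre x by simp
      moreover have "fmap n x = s" using s x fmap_ginv by (auto simp: motzkin_paths_def)
      ultimately show "x \<in> admissible n" using adm_iff[of n "fst x" "snd x"] s by (auto simp: motzkin_paths_def)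
    qed
  qed
  show "\<forall>(q::'a::comm_ring_1) t. \<forall>A\<in>admissible n. adm_weight n q t A = rho q t (fmap n A)"
    using weight_eq by fastforce
qed

end
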